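(* Let $K\subset\mathbb{R}$ be a real biquadratic bicyclic number field with quadratic subfields $k_1,k_2,k_3$, let $\varepsilon_i>1$ be the fundamental unit of $k_i$ and $\lambda_i=N_{k_i/\mathbb{Q}}(\varepsilon_i)$. Let $\eta=\mathrm{sgn}(\eta)\,\varepsilon_1^{m_1}\varepsilon_2^{m_2}\varepsilon_3^{m_3}\in\mathcal{O}_{k_1}^\times\mathcal{O}_{k_2}^\times\mathcal{O}_{k_3}^\times$ with $m_1,m_2,m_3\in\mathbb{Z}$. Then $\eta\in\mathcal{O}_K^*$ if and only if $\lambda_1^{m_1}=\lambda_2^{m_2}=\lambda_3^{m_3}$.
   Context: $\mathcal{O}_k^\times$ denotes the unit group of the ring of integers of a number field $k$. For real $K$, $\mathcal{O}_K^*$ is defined as the set of $\eta\in\mathcal{O}_{k_1}^\times\mathcal{O}_{k_2}^\times\mathcal{O}_{k_3}^\times$ that are totally positive or totally negative (i.e. all conjugates of $\eta$ have the same sign). $\mathrm{sgn}(x)$ is the sign of $x$. *)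

theory Defs
  imports Complex_Main "HOL-Computational_Algebra.Polynomial" "HOL-Computational_Algebra.Squarefree"
begin

definition quad_field :: "int \<Rightarrow> real set" where
  "quad_field d = {of_rat p + of_rat q * sqrt (real_of_int d) | p q. True}"

definition quad_ints :: "int \<Rightarrow> real set" where
  "quad_ints d = {x \<in> quad_field d. algebraic_int x}"

definition quad_units :: "int \<Rightarrow> real set" where
  "quad_units d = {x \<in> quad_ints d. x \<noteq> 0 \<and> inverse x \<in> quad_ints d}"

definition fund_unit :: "int \<Rightarrow> real \<Rightarrow> bool" where
  "fund_unit d \<epsilon> \<longleftrightarrow> \<epsilon> \<in> quad_units d \<and> \<epsilon> > 1 \<and>
     (\<forall>u \<in> quad_units d. \<exists>n::int. u = \<epsilon> powi n \<or> u = - (\<epsilon> powi n))"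

definition quad_norm :: "int \<Rightarrow> real \<Rightarrow> real" where
  "quad_norm d x = (THE n. \<exists>p q :: rat. x = of_rat p + of_rat q * sqrt (real_of_int d) \<and>
       n = of_rat (p^2 - of_int d * q^2))"

definition prod_units :: "int \<Rightarrow> int \<Rightarrow> int \<Rightarrow> real set" where
  "prod_units d1 d2 d3 = {a * b * c | a b c. a \<in> quad_units d1 \<and> b \<in> quad_units d2 \<and> c \<in> quad_units d3}"

text \<open>x lies in K = Q(sqrt d1, sqrt d2) and all its conjugates (images under the four
  automorphisms sqrt d1 -> s sqrt d1, sqrt d2 -> t sqrt d2) have the same sign as x.\<close>
definition totally_signed :: "int \<Rightarrow> int \<Rightarrow> real \<Rightarrow> bool" where
  "totally_signed d1 d2 x \<longleftrightarrow>
    (\<exists>a b c e :: rat.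
       x = of_rat a + of_rat b * sqrt (real_of_int d1) + of_rat c * sqrt (real_of_int d2)
           + of_rat e * sqrt (real_of_int (d1 * d2)) \<and>
       (\<forall>s \<in> {-1, 1::real}. \<forall>t \<in> {-1, 1::real}.
          sgn (of_rat a + s * of_rat b * sqrt (real_of_int d1) + t * of_rat c * sqrt (real_of_int d2)
               + s * t * of_rat e * sqrt (real_of_int (d1 * d2))) = sgn x))"

definition OK_star :: "int \<Rightarrow> int \<Rightarrow> int \<Rightarrow> real set" where
  "OK_star d1 d2 d3 = {x \<in> prod_units d1 d2 d3. totally_signed d1 d2 x}"

end

theory Submission imports Defs begin
lemma sqrt_sqfree_irrat:
  fixes d :: int assumes "d > 1" "squarefree d"
  shows "sqrt (real_of_int d) \<notin> \<rat>"
proof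
  assume "sqrt (real_of_int d) \<in> \<rat>"
  then obtain a b :: int where ab: "b > 0" "coprime a b" and x: "sqrt (real_of_int d) = of_int a / of_int b"
    by (auto elim: Rats_cases')
  have d0: "real_of_int d \<ge> 0" using assms(1) by simp
  have "real_of_int d = (sqrt (real_of_int d))^2" using d0 by simp
  also have "\<dots> = (of_int a / of_int b)^2" using x by simp
  finally have "real_of_int d * of_int b ^ 2 = of_int a ^ 2" using ab by (simp add: field_simps)
  hence e: "d * b^2 = a^2" by (metis of_int_eq_iff of_int_mult of_int_power)
  hence "b dvd a^2" by (metis dvd_triv_right power2_eq_square dvd_mult_left)
  moreover have "coprime b (a^2)" using ab(2) by (simp add: coprime_commute)
  ultimately have "b dvd 1" using coprime_common_divisor[of b "a^2" b] by simp
  hence "b = 1" using ab by auto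
  hence "a^2 dvd d" using e by simp
  hence "a dvd 1" using assms(2) squarefreeD by blast
  hence "a^2 = 1" by (metis power2_abs power_one zdvd1_eq)
  thus False using e \<open>b = 1\<close> assms(1) by simp
qed

lemma d3_facts:
  fixes d1 d2 d3 :: int
  assumes "d1 > 1" "d2 > 1" "squarefree d1" "squarefree d2" "d1 \<noteq> d2"
    and "d3 = (d1 * d2) div (gcd d1 d2)^2"
  shows "d3 > 1" "squarefree d3" "d1 * d2 = (gcd d1 d2)^2 * d3" "gcd d1 d2 > 0"
proof -
  define g where "g = gcd d1 d2"
  have g0: "g > 0" using assms by (simp add: g_def)
  obtain a b where a: "d1 = a * g" and b: "d2 = b * g" and cop: "coprime a b"
    using gcd_coprime_exists[of d1 d2] g0 unfolding g_def by auto
  have p: "d1 * d2 = g^2 * (a*b)" using a b by (simp add: power2_eq_square algebra_simps)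
  have d3: "d3 = a * b" using assms(6) p g0 unfolding g_def[symmetric] by simp
  have ap: "a > 0" using a g0 assms(1) zero_less_mult_iff[of a g] by linarith
  have bp: "b > 0" using b g0 assms(2) zero_less_mult_iff[of b g] by linarith
  have "squarefree a" using assms(3) a squarefree_multD by blast
  moreover have "squarefree b" using assms(4) b squarefree_multD by blast
  ultimately show "squarefree d3" using d3 cop squarefree_mult_coprime by blast
  show "d3 > 1"
  proof (rule ccontr)
    assume "\<not> d3 > 1"
    hence "a * b \<le> 1" using d3 by simp
    moreover have "a * b \<ge> a" "a * b \<ge> b" using ap bp by (simp_all add: mult_le_cancel_left1 mult_le_cancel_right1)
    ultimately have "a = 1" "b = 1" using ap bp by linarith+
    thus False using a b assms(5) by simp
  qed
  show "d1 * d2 = (gcd d1 d2)^2 * d3" using p d3 g_def by simp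
  show "gcd d1 d2 > 0" using g0 g_def by simp
qed

lemma map_poly_add_hom:
  assumes "f 0 = 0" "\<And>x y. f (x+y) = f x + f y"
  shows "map_poly f (p + q) = map_poly f p + map_poly f q"
  by (rule poly_eqI) (simp add: coeff_map_poly assms)

lemma map_poly_mult_hom:
  fixes f :: "'a::comm_ring_1 \<Rightarrow> 'b::comm_ring_1"
  assumes "f 0 = 0" "\<And>x y. f (x+y) = f x + f y" "\<And>x y. f (x*y) = f x * f y"
  shows "map_poly f (p * q) = map_poly f p * map_poly f q"
proof (induction p)
  case 0 thus ?case by simp
next
  case (pCons a p)
  have "map_poly f (pCons a p * q) = map_poly f (smult a q + pCons 0 (p * q))" by simp
  also have "\<dots> = map_poly f (smult a q) + map_poly f (pCons 0 (p * q))"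
    by (rule map_poly_add_hom) (use assms in auto)
  also have "\<dots> = smult (f a) (map_poly f q) + pCons 0 (map_poly f p * map_poly f q)"
    using pCons.IH assms by (simp add: map_poly_smult map_poly_pCons)
  also have "\<dots> = pCons (f a) (map_poly f p) * map_poly f q" by simp
  also have "\<dots> = map_poly f (pCons a p) * map_poly f q" using assms by (simp add: map_poly_pCons)
  finally show ?case .
qed

lemma clear_denoms:
  fixes A :: "rat poly"
  shows "\<exists>a::int. a > 0 \<and> (\<exists>A'::int poly. map_poly of_int A' = smult (of_int a) A)"
proof (induction A)
  case 0 thus ?case by (intro exI[of _ 1]) (auto intro: exI[of _ 0])
next
  case (pCons c A)
  then obtain a A' where a: "a > 0" "map_poly of_int A' = smult (of_int a) A" by blast
  obtain n k where q: "quotient_of c = (n, k)" by force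
  have nk: "k > 0" "c = of_int n / of_int k"
    using quotient_of_denom_pos[OF q] quotient_of_div[OF q] by auto
  show ?case
  proof (intro exI conjI)
    show "a * k > 0" using a nk by simp
    have "map_poly of_int (pCons (n * a) (smult k A')) = pCons (of_int (n*a)) (smult (of_int k) (map_poly of_int A'))"
      by (simp add: map_poly_pCons map_poly_smult)
    also have "\<dots> = smult (of_int (a * k)) (pCons c A)"
      using a nk by (simp add: field_simps)
    finally show "map_poly of_int (pCons (n * a) (smult k A')) = smult (of_int (a * k)) (pCons c A)" .
  qed
qed

lemma gauss_monic:
  fixes P :: "int poly" and A B :: "rat poly"
  assumes "lead_coeff P = 1" "map_poly of_int P = A * B" "lead_coeff A = 1"
  shows "coeff A i \<in> \<int>"
proof -
  obtain a A' where a: "a > 0" "map_poly of_int A' = smult (of_int a) A" using clear_denoms by blast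
  obtain b B' where b: "b > 0" "map_poly of_int B' = smult (of_int b) B" using clear_denoms by blast
  have hom: "map_poly (of_int :: int \<Rightarrow> rat) (p * q) = map_poly of_int p * map_poly of_int q" for p q
    by (rule map_poly_mult_hom) auto
  have lB: "lead_coeff B = 1"
  proof -
    have "lead_coeff (map_poly (of_int :: int \<Rightarrow> rat) P) = 1" using assms(1)
      by (simp add: coeff_map_poly degree_map_poly)
    thus ?thesis using assms(2,3) by (simp add: lead_coeff_mult)
  qed
  have "map_poly of_int (A' * B') = smult (of_int (a*b)) (A * B)"
    using a b hom by (simp add: mult.commute mult.left_commute)
  also have "\<dots> = map_poly of_int (smult (a*b) P)" using assms(2) by (simp add: map_poly_smult)
  finally have eq0: "map_poly (of_int :: int \<Rightarrow> rat) (A' * B') = map_poly of_int (smult (a*b) P)" .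
  have eq: "A' * B' = smult (a*b) P"
  proof (rule poly_eqI)
    fix n
    have "(of_int (coeff (A' * B') n) :: rat) = of_int (coeff (smult (a*b) P) n)"
      using arg_cong[OF eq0, of "\<lambda>p. coeff p n"] by (simp only: coeff_map_poly of_int_0)
    thus "coeff (A' * B') n = coeff (smult (a*b) P) n" by (simp only: of_int_eq_iff)
  qed
  have cP: "content P = 1"
  proof -
    have "content P dvd 1" using content_dvd_coeff[of P "degree P"] assms(1) by simp
    thus ?thesis by (simp add: content_def)
  qed
  have "content (A' * B') = a * b" using eq cP a b by simp
  hence cAB: "content A' * content B' = a * b" by (simp add: content_mult)
  have lA': "lead_coeff A' = a"
  proof -
    have "lead_coeff (map_poly (of_int :: int \<Rightarrow> rat) A') = of_int (lead_coeff A')"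
      by (simp add: coeff_map_poly degree_map_poly)
    moreover have "lead_coeff (map_poly (of_int :: int \<Rightarrow> rat) A') = of_int a"
      using a assms(3) by simp
    ultimately show ?thesis by simp
  qed
  have lB': "lead_coeff B' = b"
  proof -
    have "lead_coeff (map_poly (of_int :: int \<Rightarrow> rat) B') = of_int (lead_coeff B')"
      by (simp add: coeff_map_poly degree_map_poly)
    moreover have "lead_coeff (map_poly (of_int :: int \<Rightarrow> rat) B') = of_int b"
      using b lB by simp
    ultimately show ?thesis by simp
  qed
  have "content A' dvd a" using content_dvd_coeff[of A' "degree A'"] lA' by simp
  hence ca: "content A' \<le> a" using a by (simp add: zdvd_imp_le)
  have "content B' dvd b" using content_dvd_coeff[of B' "degree B'"] lB' by simp
  hence cb: "content B' \<le> b" using b by (simp add: zdvd_imp_le)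
  have ca0: "content A' \<ge> 0" "content B' \<ge> 0" by (simp_all add: content_def)
  have "content A' = a"
  proof (rule ccontr)
    assume "content A' \<noteq> a"
    hence "content A' < a" using ca by simp
    hence "content A' * content B' < a * b"
    proof -
      have "content A' * content B' \<le> content A' * b" using cb ca0 by (simp add: mult_left_mono)
      also have "\<dots> < a * b" using \<open>content A' < a\<close> b by simp
      finally show ?thesis .
    qed
    thus False using cAB by simp
  qed
  hence "a dvd coeff A' i" using content_dvd_coeff[of A' i] by simp
  then obtain z where z: "coeff A' i = a * z" by blast
  have "of_int (coeff A' i) = of_int a * coeff A i"
    using arg_cong[OF a(2), of "\<lambda>p. coeff p i"] by (simp add: coeff_map_poly)
  hence "coeff A i = of_int z" using z a by (simp add: field_simps)
  thus ?thesis by simp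
qed

lemma of_rat_Ints: "(r::rat) \<in> \<int> \<Longrightarrow> (of_rat r :: real) \<in> \<int>"
  by (auto elim!: Ints_cases)

lemma lin2:
  fixes w :: real
  assumes "w \<notin> \<rat>" "of_rat a + of_rat b * w = 0"
  shows "a = 0 \<and> b = 0"
proof (cases "b = 0")
  case True thus ?thesis using assms by simp
next
  case False
  hence "w = - of_rat a / of_rat b" using assms(2) by (simp add: field_simps eq_neg_iff_add_eq_0)
  hence "w \<in> \<rat>" by simp
  thus ?thesis using assms(1) by simp
qed

lemma lin2':
  fixes w :: real
  assumes "w \<notin> \<rat>" "of_rat a + of_rat b * w = of_rat a' + of_rat b' * w"
  shows "a = a' \<and> b = b'"
proof -
  have "of_rat (a - a') + of_rat (b - b') * w = 0" using assms(2)
    by (simp add: of_rat_diff algebra_simps)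
  thus ?thesis using lin2[OF assms(1), of "a-a'" "b-b'"] by simp
qed

lemma quad_alg_int_norm:
  fixes w :: real and D p q :: rat
  assumes w: "w \<notin> \<rat>" "w * w = of_rat D" and ai: "algebraic_int (of_rat p + of_rat q * w)"
  shows "2*p \<in> \<int> \<and> p^2 - D*q^2 \<in> \<int>"
proof (cases "q = 0")
  case True
  hence "algebraic_int (of_rat p :: real)" using ai by simp
  hence "(of_rat p :: real) \<in> \<int>" using rational_algebraic_int_is_int[of "of_rat p :: real"] Rats_of_rat by blast
  then obtain k where "(of_rat p :: real) = of_int k" by (auto elim!: Ints_cases)
  hence "p = of_int k" by (metis of_rat_eq_iff of_rat_of_int_eq)
  thus ?thesis using True by simp
next
  case False
  define x where "x = of_rat p + of_rat q * w"
  obtain P :: "int poly" where P: "poly (map_poly of_int P) x = 0" "lead_coeff P = 1"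
    using ai algebraic_int_altdef_ipoly unfolding x_def by blast
  define PQ where "PQ = map_poly (of_int :: int \<Rightarrow> rat) P"
  define N where "N = p^2 - D*q^2"
  define m where "m = [: N, -2*p, 1 :]"
  define ev where "ev = (\<lambda>A :: rat poly. poly (map_poly (of_rat :: rat \<Rightarrow> real) A) x)"
  have hom: "map_poly (of_rat :: rat \<Rightarrow> real) (A * B) = map_poly of_rat A * map_poly of_rat B" for A B
    by (rule map_poly_mult_hom) (auto simp: of_rat_add of_rat_mult)
  have homa: "map_poly (of_rat :: rat \<Rightarrow> real) (A + B) = map_poly of_rat A + map_poly of_rat B" for A B
    by (rule map_poly_add_hom) (auto simp: of_rat_add)
  have evm: "ev (A * B) = ev A * ev B" "ev (A + B) = ev A + ev B" for A B
    unfolding ev_def by (simp_all add: hom homa)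
  have "map_poly (of_rat :: rat \<Rightarrow> real) PQ = map_poly of_int P"
    unfolding PQ_def by (simp add: map_poly_map_poly o_def)
  hence ev1: "ev PQ = 0" using P unfolding ev_def by simp
  have ev2: "ev m = 0"
  proof -
    have "ev m = of_rat N - 2 * of_rat p * x + x * x"
      unfolding ev_def m_def by (simp add: map_poly_pCons of_rat_mult of_rat_minus algebra_simps)
    also have "\<dots> = of_rat N - of_rat p * of_rat p + of_rat q * of_rat q * (w * w)"
      unfolding x_def by (simp add: algebra_simps)
    also have "\<dots> = 0" unfolding N_def using w(2)
      by (simp add: of_rat_diff of_rat_mult power2_eq_square)
    finally show ?thesis .
  qed
  have m0: "m \<noteq> 0" "degree m = 2" "lead_coeff m = 1" unfolding m_def by auto
  define R where "R = PQ mod m"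
  have dec: "PQ = (PQ div m) * m + R" unfolding R_def by simp
  have evR: "ev R = 0" using arg_cong[OF dec, of ev] ev1 ev2 evm by simp
  have degR: "degree R \<le> 1" using degree_mod_less[OF m0(1), of PQ] m0(2) unfolding R_def by auto
  have Req: "R = [: coeff R 0, coeff R 1 :]"
  proof (rule poly_eqI)
    fix n show "coeff R n = coeff [: coeff R 0, coeff R 1 :] n"
      using degR by (cases n; cases "n - 1") (auto simp: coeff_eq_0)
  qed
  have "ev R = of_rat (coeff R 0) + of_rat (coeff R 1) * x"
    unfolding ev_def by (subst Req) (simp add: map_poly_pCons)
  also have "\<dots> = of_rat (coeff R 0 + coeff R 1 * p) + of_rat (coeff R 1 * q) * w"
    unfolding x_def by (simp add: of_rat_add of_rat_mult algebra_simps)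
  finally have "coeff R 0 + coeff R 1 * p = 0 \<and> coeff R 1 * q = 0" using evR lin2[OF w(1)] by metis
  hence "coeff R 1 = 0" "coeff R 0 = 0" using False by auto
  hence "R = 0" using Req by simp
  hence "map_poly of_int P = m * (PQ div m)" using dec unfolding PQ_def by (simp add: mult.commute)
  hence "coeff m i \<in> \<int>" for i using gauss_monic[OF P(2) _ m0(3)] by blast
  from this[of 0] this[of 1] have "N \<in> \<int>" "-2*p \<in> \<int>" unfolding m_def by simp_all
  thus ?thesis unfolding N_def by (metis minus_in_Ints_iff mult_minus_left)
qed

lemma qi_alg_int:
  fixes w :: real and D p q :: rat
  assumes w: "w * w = of_rat D" and "2*p \<in> \<int>" "p^2 - D*q^2 \<in> \<int>"
  shows "algebraic_int (of_rat p + of_rat q * w)"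
proof
  define x where "x = of_rat p + of_rat q * w"
  let ?P = "[: of_rat (p^2 - D*q^2), - of_rat (2*p), 1 :] :: real poly"
  show "lead_coeff ?P = 1" by simp
  have c: "of_rat (p^2 - D*q^2) \<in> (\<int> :: real set)" "of_rat (2*p) \<in> (\<int> :: real set)"
    using assms by (simp_all add: of_rat_Ints)
  show "\<forall>i. coeff ?P i \<in> \<int>"
  proof
    fix i show "coeff ?P i \<in> \<int>" using c by (cases i; cases "i - 1") (auto simp: coeff_pCons split: nat.splits)
  qed
  have "poly ?P x = of_rat p * of_rat p - of_rat D * of_rat q * of_rat q - 2 * of_rat p * x + x * x"
    by (simp add: of_rat_diff of_rat_mult power2_eq_square algebra_simps)
  also have "\<dots> = 0" unfolding x_def using w by (simp add: algebra_simps)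
  finally show "poly ?P (of_rat p + of_rat q * w) = 0" unfolding x_def .
qed

lemma rat_alg_int_Ints:
  fixes r :: rat
  assumes "algebraic_int (of_rat r :: real)"
  shows "r \<in> \<int>"
proof -
  have "(of_rat r :: real) \<in> \<int>" using rational_algebraic_int_is_int[OF assms] Rats_of_rat by blast
  then obtain k where "(of_rat r :: real) = of_int k" by (auto elim!: Ints_cases)
  hence "r = of_int k" by (metis of_rat_eq_iff of_rat_of_int_eq)
  thus ?thesis by simp
qed

lemma root_int:
  fixes r T C :: rat
  assumes "T \<in> \<int>" "C \<in> \<int>" "r * r - T * r + C = 0"
  shows "r \<in> \<int>"
proof (rule rat_alg_int_Ints, rule algebraic_int.intros)
  let ?P = "[: of_rat C, - of_rat T, 1 :] :: real poly"
  show "lead_coeff ?P = 1" by simp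
  have c: "of_rat C \<in> (\<int> :: real set)" "of_rat T \<in> (\<int> :: real set)"
    using assms by (simp_all add: of_rat_Ints)
  show "\<forall>i. coeff ?P i \<in> \<int>"
  proof
    fix i show "coeff ?P i \<in> \<int>" using c by (cases i; cases "i - 1") (auto simp: coeff_pCons split: nat.splits)
  qed
  have "poly ?P (of_rat r) = of_rat (r * r - T * r + C)"
    by (simp add: of_rat_diff of_rat_mult of_rat_add algebra_simps)
  thus "poly ?P (of_rat r) = 0" using assms(3) by simp
qed

lemma quad_mult_expand:
  fixes a b c e w :: real
  shows "(a + b*w) * (c + e*w) = (a*c + b*e*(w*w)) + (a*e + b*c)*w"
  by (simp add: algebra_simps)

lemma quad_mult_rat:
  fixes w :: real
  assumes "w * w = of_rat D"
  shows "(of_rat a + of_rat b * w) * (of_rat c + of_rat e * w) = of_rat (a*c + b*e*D) + of_rat (a*e + b*c) * w"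
  unfolding quad_mult_expand assms by (simp add: of_rat_add of_rat_mult)

definition Uq :: "real \<Rightarrow> rat \<Rightarrow> real \<Rightarrow> rat \<Rightarrow> bool" where
  "Uq w D x n \<longleftrightarrow> (\<exists>p q. x = of_rat p + of_rat q * w \<and> 2*p \<in> \<int> \<and> p^2 - D*q^2 = n) \<and> (n = 1 \<or> n = -1)"

lemma Uq_mult:
  assumes w: "w * w = of_rat D" and "Uq w D x n" "Uq w D y n'"
  shows "Uq w D (x*y) (n*n')"
proof -
  obtain p q where x: "x = of_rat p + of_rat q * w" "2*p \<in> \<int>" "p^2 - D*q^2 = n" and n: "n = 1 \<or> n = -1"
    using assms(2) unfolding Uq_def by blast
  obtain p' q' where y: "y = of_rat p' + of_rat q' * w" "2*p' \<in> \<int>" "p'^2 - D*q'^2 = n'" and n': "n' = 1 \<or> n' = -1"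
    using assms(3) unfolding Uq_def by blast
  define P where "P = p*p' + D*q*q'"
  define Q where "Q = p*q' + q*p'"
  have "x * y = of_rat P + of_rat Q * w"
    unfolding x y P_def Q_def quad_mult_expand w
    by (simp add: of_rat_add of_rat_mult)
  moreover have "P^2 - D*Q^2 = n*n'" unfolding P_def Q_def x(3)[symmetric] y(3)[symmetric]
    by (simp add: power2_eq_square algebra_simps)
  moreover have "2*P \<in> \<int>"
  proof (rule root_int)
    obtain T where T: "2*p = of_int T" using x(2) by (auto elim!: Ints_cases)
    obtain T' where T': "2*p' = of_int T'" using y(2) by (auto elim!: Ints_cases)
    obtain N where N: "n = of_int N" using n by (metis of_int_1 of_int_minus)
    obtain N' where N': "n' = of_int N'" using n' by (metis of_int_1 of_int_minus)
    show "(2*p) * (2*p') \<in> \<int>" by (rule Ints_mult[OF x(2) y(2)])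
    have "n' * ((2*p)*(2*p) - 2*n) + n * ((2*p')*(2*p') - 2*n') = of_int (N' * (T*T - 2*N) + N*(T'*T' - 2*N'))"
      unfolding T T' N N' by simp
    thus "n' * ((2*p)*(2*p) - 2*n) + n * ((2*p')*(2*p') - 2*n') \<in> \<int>" by simp
    show "2*P * (2*P) - (2*p)*(2*p') * (2*P) + (n' * ((2*p)*(2*p) - 2*n) + n * ((2*p')*(2*p') - 2*n')) = 0"
      unfolding P_def x(3)[symmetric] y(3)[symmetric] by (simp add: power2_eq_square algebra_simps)
  qed
  moreover have "n*n' = 1 \<or> n*n' = -1" using n n' by auto
  ultimately show ?thesis unfolding Uq_def by blast
qed

lemma Uq_inv:
  assumes w: "w * w = of_rat D" and "Uq w D x n"
  shows "Uq w D (inverse x) n"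
proof -
  obtain p q where x: "x = of_rat p + of_rat q * w" "2*p \<in> \<int>" "p^2 - D*q^2 = n" and n: "n = 1 \<or> n = -1"
    using assms(2) unfolding Uq_def by blast
  have e1: "x * (of_rat (n*p) + of_rat (-n*q) * w) = of_rat (p*(n*p) + q*(-n*q)*D) + of_rat (p*(-n*q) + q*(n*p)) * w"
    unfolding x by (rule quad_mult_rat[OF w])
  have e2: "p*(n*p) + q*(-n*q)*D = n * (p^2 - D*q^2)" by (simp add: power2_eq_square algebra_simps)
  have e3: "p*(-n*q) + q*(n*p) = 0" by (simp add: algebra_simps)
  have e4: "n * (p^2 - D*q^2) = 1" using x(3) n by auto
  have "x * (of_rat (n*p) + of_rat (-n*q) * w) = 1" using e1 e2 e3 e4 by simp
  hence inv: "inverse x = of_rat (n*p) + of_rat (-n*q) * w"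
    by (metis inverse_unique)
  have "2*(n*p) \<in> \<int>" using n x(2) by (auto simp: mult.left_commute)
  moreover have "(n*p)^2 - D*(-n*q)^2 = n" using n x(3) by (auto simp: power2_eq_square algebra_simps)
  ultimately show ?thesis using inv n unfolding Uq_def by blast
qed

lemma Uq_one: "Uq w D 1 1" "Uq w D (-1) 1"
proof -
  have "(1::real) = of_rat 1 + of_rat 0 * w \<and> 2*(1::rat) \<in> \<int> \<and> (1::rat)^2 - D*0^2 = 1" by simp
  thus "Uq w D 1 1" unfolding Uq_def by blast
  have "(-1::real) = of_rat (-1) + of_rat 0 * w \<and> 2*(-1::rat) \<in> \<int> \<and> (-1::rat)^2 - D*0^2 = 1" by simp
  thus "Uq w D (-1) 1" unfolding Uq_def by blast
qed

lemma Uq_power: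
  assumes w: "w * w = of_rat D" and "Uq w D x n"
  shows "Uq w D (x ^ k) (n ^ k)"
  by (induction k) (auto intro: Uq_mult[OF w] assms Uq_one)

lemma Uq_powi:
  assumes w: "w * w = of_rat D" and "Uq w D x n"
  shows "Uq w D (x powi m) (n powi m)"
proof (cases "m \<ge> 0")
  case True
  then obtain k where "m = int k" by (metis nonneg_eq_int)
  thus ?thesis using Uq_power[OF assms] by simp
next
  case False
  define k where "k = nat (-m)"
  have k: "m = - int k" using False unfolding k_def by simp
  have "Uq w D (inverse (x ^ k)) (n ^ k)" using Uq_inv[OF w Uq_power[OF assms]] by simp
  moreover have "n ^ k = inverse (n ^ k)"
  proof -
    have "n * n = 1" using assms(2) unfolding Uq_def by auto
    hence "n ^ k * n ^ k = 1" by (metis power_mult_distrib power_one)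
    thus ?thesis by (metis inverse_unique)
  qed
  ultimately show ?thesis using k by (simp add: power_int_minus)
qed

lemma Uq_rep:
  assumes w: "w * w = of_rat D" and "Uq w D x n"
  obtains p q where "x = of_rat p + of_rat q * w" "2*p \<in> \<int>" "p^2 - D*q^2 = n" "n = 1 \<or> n = -1"
    "x * (of_rat p - of_rat q * w) = of_rat n"
proof -
  obtain p q where x: "x = of_rat p + of_rat q * w" "2*p \<in> \<int>" "p^2 - D*q^2 = n" and n: "n = 1 \<or> n = -1"
    using assms(2) unfolding Uq_def by blast
  have "x * (of_rat p + of_rat (-q) * w) = of_rat (p*p + q*(-q)*D) + of_rat (p*(-q) + q*p) * w"
    unfolding x by (rule quad_mult_rat[OF w])
  also have "p*p + q*(-q)*D = p^2 - D*q^2" by (simp add: power2_eq_square algebra_simps)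
  also have "p*(-q) + q*p = 0" by simp
  finally have "x * (of_rat p + of_rat (-q) * w) = of_rat (p^2 - D*q^2)" by simp
  hence "x * (of_rat p - of_rat q * w) = of_rat (p^2 - D*q^2)" by (simp add: of_rat_minus)
  thus ?thesis using that x n by simp
qed

lemma Uq_nz:
  assumes w: "w * w = of_rat D" and "Uq w D x n"
  shows "x \<noteq> 0"
proof
  assume "x = 0"
  obtain p q where "x * (of_rat p - of_rat q * w) = of_rat n" "n = 1 \<or> n = -1"
    using Uq_rep[OF assms] by metis
  thus False using \<open>x = 0\<close> by auto
qed

lemma sqw: "(d::int) \<ge> 0 \<Longrightarrow> sqrt (real_of_int d) * sqrt (real_of_int d) = of_rat (of_int d)"
  by simp

lemma Uq_ints:
  assumes "(d::int) \<ge> 0" "Uq (sqrt (real_of_int d)) (of_int d) x n"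
  shows "x \<in> quad_ints d"
proof -
  obtain p q where x: "x = of_rat p + of_rat q * sqrt (real_of_int d)" "2*p \<in> \<int>" "p^2 - of_int d*q^2 = n"
    and n: "n = 1 \<or> n = -1"
    using assms(2) unfolding Uq_def by blast
  have "p^2 - of_int d*q^2 \<in> \<int>" using x(3) n by auto
  hence "algebraic_int x" unfolding x(1) using qi_alg_int[OF sqw[OF assms(1)] x(2)] by blast
  moreover have "x \<in> quad_field d" unfolding quad_field_def x(1) by blast
  ultimately show ?thesis unfolding quad_ints_def by blast
qed

lemma Uq_units:
  assumes "(d::int) \<ge> 0" "Uq (sqrt (real_of_int d)) (of_int d) x n"
  shows "x \<in> quad_units d"
  using Uq_ints[OF assms] Uq_ints[OF assms(1) Uq_inv[OF sqw[OF assms(1)] assms(2)]]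
    Uq_nz[OF sqw[OF assms(1)] assms(2)]
  unfolding quad_units_def by blast

lemma Uq_norm:
  assumes "sqrt (real_of_int d) \<notin> \<rat>" "Uq (sqrt (real_of_int d)) (of_int d) x n"
  shows "quad_norm d x = of_rat n"
proof -
  obtain p q where x: "x = of_rat p + of_rat q * sqrt (real_of_int d)" "p^2 - of_int d*q^2 = n"
    using assms(2) unfolding Uq_def by blast
  show ?thesis unfolding quad_norm_def
  proof (rule the_equality)
    show "\<exists>p q. x = of_rat p + of_rat q * sqrt (real_of_int d) \<and> of_rat n = of_rat (p^2 - of_int d * q^2)"
      using x by metis
  next
    fix m assume "\<exists>p' q'. x = of_rat p' + of_rat q' * sqrt (real_of_int d) \<and> m = of_rat (p'^2 - of_int d * q'^2)"
    then obtain p' q' where "x = of_rat p' + of_rat q' * sqrt (real_of_int d)" "m = of_rat (p'^2 - of_int d * q'^2)"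
      by blast
    moreover have "p' = p \<and> q' = q" using lin2'[OF assms(1)] x(1) calculation(1) by metis
    ultimately show "m = of_rat n" using x(2) by simp
  qed
qed

lemma fund_Uq:
  assumes "(d::int) > 1" "squarefree d" "fund_unit d \<epsilon>"
  shows "\<exists>n. Uq (sqrt (real_of_int d)) (of_int d) \<epsilon> n"
proof -
  let ?w = "sqrt (real_of_int d)"
  have irr: "?w \<notin> \<rat>" using sqrt_sqfree_irrat assms by blast
  have w: "?w * ?w = of_rat (of_int d)" using assms(1) by simp
  have u: "\<epsilon> \<in> quad_units d" using assms(3) unfolding fund_unit_def by blast
  then obtain p q where e: "\<epsilon> = of_rat p + of_rat q * ?w" and ai: "algebraic_int \<epsilon>"
    unfolding quad_units_def quad_ints_def quad_field_def by blast
  obtain p' q' where e': "inverse \<epsilon> = of_rat p' + of_rat q' * ?w" and ai': "algebraic_int (inverse \<epsilon>)"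
    using u unfolding quad_units_def quad_ints_def quad_field_def by blast
  have e0: "\<epsilon> \<noteq> 0" using u unfolding quad_units_def by blast
  have I1: "2*p \<in> \<int> \<and> p^2 - of_int d*q^2 \<in> \<int>" using quad_alg_int_norm[OF irr w] ai e by blast
  have I2: "p'^2 - of_int d*q'^2 \<in> \<int>" using quad_alg_int_norm[OF irr w, of p' q'] ai' e' by simp
  have "1 = \<epsilon> * inverse \<epsilon>" using e0 by simp
  also have "\<dots> = (of_rat p + of_rat q * ?w) * (of_rat p' + of_rat q' * ?w)"
    by (simp only: e' flip: e)
  also have "\<dots> = of_rat (p*p' + q*q'*of_int d) + of_rat (p*q' + q*p') * ?w"
    by (rule quad_mult_rat[OF w])
  finally have "of_rat 1 + of_rat 0 * ?w = of_rat (p*p' + q*q'*of_int d) + of_rat (p*q' + q*p') * ?w" by simp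
  hence c: "p*p' + q*q'*of_int d = 1" "p*q' + q*p' = 0" using lin2'[OF irr] by metis+
  have "(p^2 - of_int d*q^2) * (p'^2 - of_int d*q'^2) = (p*p' + q*q'*of_int d)^2 - of_int d * (p*q' + q*p')^2"
    by (simp add: power2_eq_square algebra_simps)
  also have "\<dots> = 1" using c by simp
  finally have prod1: "(p^2 - of_int d*q^2) * (p'^2 - of_int d*q'^2) = 1" .
  obtain k where k: "p^2 - of_int d*q^2 = of_int k" using I1 by (auto elim!: Ints_cases)
  obtain k' where k': "p'^2 - of_int d*q'^2 = of_int k'" using I2 by (auto elim!: Ints_cases)
  have "k * k' = 1" using prod1 unfolding k k' by (metis of_int_eq_1_iff of_int_mult)
  hence "k = 1 \<or> k = -1" by (metis zmult_eq_1_iff)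
  hence "p^2 - of_int d*q^2 = 1 \<or> p^2 - of_int d*q^2 = -1" using k by auto
  thus ?thesis using I1 e unfolding Uq_def by blast
qed

lemma of_rat_powi: "(of_rat (r powi m) :: real) = of_rat r powi m"
proof (cases "m \<ge> 0")
  case True
  thus ?thesis by (simp add: power_int_nonneg_exp of_rat_power)
next
  case False
  define k where "k = nat (-m)"
  have k: "m = - int k" using False unfolding k_def by simp
  show ?thesis unfolding k by (simp add: power_int_minus of_rat_inverse of_rat_power)
qed

lemma sgn_N_div:
  fixes y N :: real
  assumes "y \<noteq> 0" "N = 1 \<or> N = -1"
  shows "sgn (N / y) = N * sgn y"
  using assms by (cases "y > 0") (auto simp: sgn_if)

lemma expand3:
  fixes u v :: real and S P1 Q1 P2 Q2 P3 R3 D1 D2 :: rat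
  assumes "u * u = of_rat D1" "v * v = of_rat D2"
  shows "of_rat (S*(P1*P2*P3 + Q1*Q2*R3*D1*D2)) + of_rat (S*(Q1*P2*P3 + P1*Q2*R3*D2)) * u
       + of_rat (S*(P1*Q2*P3 + Q1*P2*R3*D1)) * v + of_rat (S*(P1*P2*R3 + Q1*Q2*P3)) * (u*v)
     = of_rat S * (of_rat P1 + of_rat Q1 * u) * (of_rat P2 + of_rat Q2 * v) * (of_rat P3 + of_rat R3 * (u*v))"
  unfolding of_rat_add of_rat_mult assms[symmetric] by algebra

lemma lin4:
  fixes u v :: real and a b c e D1 D2 :: rat
  assumes irr: "u \<notin> \<rat>" "v \<notin> \<rat>" "u*v \<notin> \<rat>" and sq: "u*u = of_rat D1" "v*v = of_rat D2"
    and eq: "of_rat a + of_rat b * u + of_rat c * v + of_rat e * (u*v) = 0"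
  shows "a = 0 \<and> b = 0 \<and> c = 0 \<and> e = 0"
proof -
  define \<Delta> where "\<Delta> = c*c - e*e*D1"
  define X0 where "X0 = a*c - b*e*D1"
  define X1 where "X1 = b*c - a*e"
  have "of_rat X0 + of_rat X1 * u + of_rat \<Delta> * v
      = (of_rat a + of_rat b * u + of_rat c * v + of_rat e * (u*v)) * (of_rat c - of_rat e * u)"
    unfolding X0_def X1_def \<Delta>_def of_rat_diff of_rat_mult sq(1)[symmetric] by algebra
  hence H: "of_rat X0 + of_rat X1 * u + of_rat \<Delta> * v = 0" using eq by simp
  have "\<Delta> = 0"
  proof (rule ccontr)
    assume D0: "\<Delta> \<noteq> 0"
    have "of_rat (X0*X0 + X1*X1*D1 - \<Delta>*\<Delta>*D2) + of_rat (2*X0*X1) * u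
       = (of_rat X0 + of_rat X1 * u) * (of_rat X0 + of_rat X1 * u) - (of_rat \<Delta> * v) * (of_rat \<Delta> * v)"
      unfolding of_rat_diff of_rat_mult of_rat_add of_rat_numeral_eq sq[symmetric] by algebra
    also have "of_rat X0 + of_rat X1 * u = - (of_rat \<Delta> * v)" using H by (simp add: eq_neg_iff_add_eq_0)
    finally have "of_rat (X0*X0 + X1*X1*D1 - \<Delta>*\<Delta>*D2) + of_rat (2*X0*X1) * u = 0" by simp
    hence "2*X0*X1 = 0" using lin2[OF irr(1)] by blast
    hence "X0 = 0 \<or> X1 = 0" by simp
    thus False
    proof
      assume "X1 = 0"
      hence "v = - of_rat X0 / of_rat \<Delta>" using H D0 by (simp add: field_simps eq_neg_iff_add_eq_0)
      hence "v \<in> \<rat>" by simp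
      thus False using irr by simp
    next
      assume "X0 = 0"
      hence "of_rat \<Delta> * v = - of_rat X1 * u" using H by (simp add: eq_neg_iff_add_eq_0)
      hence "of_rat \<Delta> * (u * v) = - of_rat X1 * (u * u)" by (metis mult.left_commute mult.assoc)
      hence "u * v = - of_rat X1 * of_rat D1 / of_rat \<Delta>" using D0 sq by (simp add: field_simps)
      hence "u * v \<in> \<rat>" by simp
      thus False using irr by simp
    qed
  qed
  have "e = 0"
  proof (rule ccontr)
    assume e0: "e \<noteq> 0"
    have "c*c = e*e*D1" using \<open>\<Delta> = 0\<close> unfolding \<Delta>_def by simp
    hence "D1 = (c/e)*(c/e)" using e0 by (simp add: field_simps)
    hence "(u - of_rat (c/e)) * (u + of_rat (c/e)) = 0"
      using sq(1) by (simp add: algebra_simps of_rat_mult[symmetric])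
    hence "u = of_rat (c/e) \<or> u = - of_rat (c/e)" by (simp add: eq_neg_iff_add_eq_0)
    hence "u \<in> \<rat>" by auto
    thus False using irr by simp
  qed
  hence "c = 0" using \<open>\<Delta> = 0\<close> unfolding \<Delta>_def by simp
  hence "of_rat a + of_rat b * u = 0" using eq \<open>e = 0\<close> by simp
  thus ?thesis using lin2[OF irr(1)] \<open>e = 0\<close> \<open>c = 0\<close> by blast
qed

lemma pm_eq:
  fixes x y z :: real
  assumes "x = 1 \<or> x = -1" "y = 1 \<or> y = -1" "z = 1 \<or> z = -1"
  shows "(y*z = 1 \<and> x*z = 1 \<and> x*y = 1) \<longleftrightarrow> (x = y \<and> y = z)"
  using assms by auto

theorem mainTheorem2:
  fixes d1 d2 d3 :: int and \<epsilon>1 \<epsilon>2 \<epsilon>3 lam1 lam2 lam3 s \<eta> :: real and m1 m2 m3 :: int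
  assumes "d1 > 1" "d2 > 1" "squarefree d1" "squarefree d2" "d1 \<noteq> d2"
    and "d3 = (d1 * d2) div (gcd d1 d2)^2"
    and "fund_unit d1 \<epsilon>1" "fund_unit d2 \<epsilon>2" "fund_unit d3 \<epsilon>3"
    and "lam1 = quad_norm d1 \<epsilon>1" "lam2 = quad_norm d2 \<epsilon>2" "lam3 = quad_norm d3 \<epsilon>3"
    and "s \<in> {-1, 1}"
    and "\<eta> = s * \<epsilon>1 powi m1 * \<epsilon>2 powi m2 * \<epsilon>3 powi m3"
  shows "\<eta> \<in> OK_star d1 d2 d3 \<longleftrightarrow> (lam1 powi m1 = lam2 powi m2 \<and> lam2 powi m2 = lam3 powi m3)"
proof -
  define g where "g = gcd d1 d2"
  have d3f: "d3 > 1" "squarefree d3" "d1*d2 = g^2 * d3" "g > 0"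
    using d3_facts[OF assms(1-6)] unfolding g_def by auto
  define w1 where "w1 = sqrt (real_of_int d1)"
  define w2 where "w2 = sqrt (real_of_int d2)"
  define w3 where "w3 = sqrt (real_of_int d3)"
  have irr1: "w1 \<notin> \<rat>" using sqrt_sqfree_irrat assms(1,3) unfolding w1_def by blast
  have irr2: "w2 \<notin> \<rat>" using sqrt_sqfree_irrat assms(2,4) unfolding w2_def by blast
  have irr3: "w3 \<notin> \<rat>" using sqrt_sqfree_irrat d3f(1,2) unfolding w3_def by blast
  have sq1: "w1 * w1 = of_rat (of_int d1)" unfolding w1_def using assms(1) by simp
  have sq2: "w2 * w2 = of_rat (of_int d2)" unfolding w2_def using assms(2) by simp
  have sq3: "w3 * w3 = of_rat (of_int d3)" unfolding w3_def using d3f(1) by simp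
  have sqrt12: "sqrt (real_of_int (d1*d2)) = w1 * w2" unfolding w1_def w2_def by (simp add: real_sqrt_mult)
  have w12: "w1 * w2 = of_int g * w3"
  proof -
    have "w1 * w2 = sqrt (real_of_int (d1*d2))" using sqrt12 by simp
    also have "\<dots> = sqrt ((of_int g)^2 * real_of_int d3)" using d3f(3) by simp
    also have "\<dots> = of_int g * w3" unfolding w3_def using d3f(4) by (simp add: real_sqrt_mult)
    finally show ?thesis .
  qed
  have irr12: "w1 * w2 \<notin> \<rat>"
  proof
    assume h: "w1 * w2 \<in> \<rat>"
    have "w3 = (w1 * w2) / of_int g" using w12 d3f(4) by simp
    also have "\<dots> \<in> \<rat>" using h by simp
    finally show False using irr3 by simp
  qed
  obtain n1 where U1: "Uq w1 (of_int d1) \<epsilon>1 n1" using fund_Uq[OF assms(1,3,7)] unfolding w1_def by blast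
  obtain n2 where U2: "Uq w2 (of_int d2) \<epsilon>2 n2" using fund_Uq[OF assms(2,4,8)] unfolding w2_def by blast
  obtain n3 where U3: "Uq w3 (of_int d3) \<epsilon>3 n3" using fund_Uq[OF d3f(1,2) assms(9)] unfolding w3_def by blast
  have lam1: "lam1 = of_rat n1" using Uq_norm[of d1 \<epsilon>1 n1] irr1 U1 assms(10) unfolding w1_def by simp
  have lam2: "lam2 = of_rat n2" using Uq_norm[of d2 \<epsilon>2 n2] irr2 U2 assms(11) unfolding w2_def by simp
  have lam3: "lam3 = of_rat n3" using Uq_norm[of d3 \<epsilon>3 n3] irr3 U3 assms(12) unfolding w3_def by simp
  define y1 where "y1 = \<epsilon>1 powi m1"
  define y2 where "y2 = \<epsilon>2 powi m2"
  define y3 where "y3 = \<epsilon>3 powi m3"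
  define N1 where "N1 = n1 powi m1"
  define N2 where "N2 = n2 powi m2"
  define N3 where "N3 = n3 powi m3"
  have V1: "Uq w1 (of_int d1) y1 N1" unfolding y1_def N1_def by (rule Uq_powi[OF sq1 U1])
  have V2: "Uq w2 (of_int d2) y2 N2" unfolding y2_def N2_def by (rule Uq_powi[OF sq2 U2])
  have V3: "Uq w3 (of_int d3) y3 N3" unfolding y3_def N3_def by (rule Uq_powi[OF sq3 U3])
  have lp1: "lam1 powi m1 = of_rat N1" unfolding lam1 N1_def of_rat_powi ..
  have lp2: "lam2 powi m2 = of_rat N2" unfolding lam2 N2_def of_rat_powi ..
  have lp3: "lam3 powi m3 = of_rat N3" unfolding lam3 N3_def of_rat_powi ..
  obtain P1 Q1 where r1: "y1 = of_rat P1 + of_rat Q1 * w1" "N1 = 1 \<or> N1 = -1"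
      "y1 * (of_rat P1 - of_rat Q1 * w1) = of_rat N1"
    using Uq_rep[OF sq1 V1] by metis
  obtain P2 Q2 where r2: "y2 = of_rat P2 + of_rat Q2 * w2" "N2 = 1 \<or> N2 = -1"
      "y2 * (of_rat P2 - of_rat Q2 * w2) = of_rat N2"
    using Uq_rep[OF sq2 V2] by metis
  obtain P3 Q3 where r3: "y3 = of_rat P3 + of_rat Q3 * w3" "N3 = 1 \<or> N3 = -1"
      "y3 * (of_rat P3 - of_rat Q3 * w3) = of_rat N3"
    using Uq_rep[OF sq3 V3] by metis
  have nz1: "y1 \<noteq> 0" by (rule Uq_nz[OF sq1 V1])
  have nz2: "y2 \<noteq> 0" by (rule Uq_nz[OF sq2 V2])
  have nz3: "y3 \<noteq> 0" by (rule Uq_nz[OF sq3 V3])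
  define R3 where "R3 = Q3 / of_int g"
  have R3w: "of_rat R3 * (w1 * w2) = of_rat Q3 * w3"
    unfolding R3_def w12 using d3f(4) by (simp add: of_rat_divide)
  obtain S where S: "s = of_rat S" "S = 1 \<or> S = -1"
    using assms(13) by (metis insert_iff of_rat_1 of_rat_minus singletonD)
  have eta: "\<eta> = of_rat S * y1 * y2 * y3" using assms(14) S unfolding y1_def y2_def y3_def by simp
  define D1 where "D1 = (of_int d1 :: rat)"
  define D2 where "D2 = (of_int d2 :: rat)"
  define A where "A = S*(P1*P2*P3 + Q1*Q2*R3*D1*D2)"
  define B where "B = S*(Q1*P2*P3 + P1*Q2*R3*D2)"
  define C where "C = S*(P1*Q2*P3 + Q1*P2*R3*D1)"
  define E where "E = S*(P1*P2*R3 + Q1*Q2*P3)"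
  define F where "F = (\<lambda>\<sigma> y N. if \<sigma> = (1::real) then y else (of_rat N :: real) / y)"
  define LHS where "LHS = (\<lambda>s' t'. of_rat A + s' * of_rat B * w1 + t' * of_rat C * w2
      + s' * t' * of_rat E * sqrt (real_of_int (d1 * d2)))"
  have pm: "x * x = 1" if "x \<in> {-1, 1::real}" for x using that by auto
  have cv: "LHS s' t' = of_rat S * F s' y1 N1 * F t' y2 N2 * F (s'*t') y3 N3"
    if st: "s' \<in> {-1,1}" "t' \<in> {-1,1}" for s' t'
  proof -
    have su: "(s'*w1) * (s'*w1) = of_rat D1" using pm[OF st(1)] sq1 unfolding D1_def
      by (metis mult.commute mult.left_commute mult_1)
    have tv: "(t'*w2) * (t'*w2) = of_rat D2" using pm[OF st(2)] sq2 unfolding D2_def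
      by (metis mult.commute mult.left_commute mult_1)
    have "LHS s' t' = of_rat A + of_rat B * (s'*w1) + of_rat C * (t'*w2) + of_rat E * ((s'*w1)*(t'*w2))"
      unfolding LHS_def sqrt12 by (simp add: algebra_simps)
    also have "\<dots> = of_rat S * (of_rat P1 + of_rat Q1 * (s'*w1)) * (of_rat P2 + of_rat Q2 * (t'*w2))
        * (of_rat P3 + of_rat R3 * ((s'*w1)*(t'*w2)))"
      unfolding A_def B_def C_def E_def by (rule expand3[OF su tv])
    also have "of_rat P1 + of_rat Q1 * (s'*w1) = F s' y1 N1"
    proof (cases "s' = 1")
      case True thus ?thesis unfolding F_def r1(1) by simp
    next
      case False hence "s' = -1" using st by auto
      thus ?thesis unfolding F_def using r1(3) nz1 by (simp add: field_simps)
    qed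
    also have "of_rat P2 + of_rat Q2 * (t'*w2) = F t' y2 N2"
    proof (cases "t' = 1")
      case True thus ?thesis unfolding F_def r2(1) by simp
    next
      case False hence "t' = -1" using st by auto
      thus ?thesis unfolding F_def using r2(3) nz2 by (simp add: field_simps)
    qed
    also have "of_rat P3 + of_rat R3 * ((s'*w1)*(t'*w2)) = F (s'*t') y3 N3"
    proof -
      have e: "of_rat R3 * ((s'*w1)*(t'*w2)) = (s'*t') * (of_rat Q3 * w3)"
        using R3w by (simp add: algebra_simps)
      have "s'*t' \<in> {-1,1}" using st by auto
      thus ?thesis
      proof (cases "s'*t' = 1")
        case True thus ?thesis unfolding F_def e r3(1) by simp
      next
        case False hence "s'*t' = -1" using \<open>s'*t' \<in> {-1,1}\<close> by auto
        thus ?thesis unfolding F_def e using r3(3) nz3 by (simp add: field_simps)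
      qed
    qed
    finally show ?thesis .
  qed
  have M: "of_rat N = (1::real) \<or> of_rat N = -1" if "N = 1 \<or> N = -1" for N :: rat
    using that by auto
  have sgnF: "sgn (F \<sigma> y N) = (if \<sigma> = 1 then 1 else of_rat N) * sgn y" if "y \<noteq> 0" "N = 1 \<or> N = -1" for \<sigma> y N
    unfolding F_def using sgn_N_div[OF that(1) M[OF that(2)]] by simp
  have sgn_eta: "sgn \<eta> \<noteq> 0" using eta nz1 nz2 nz3 S(2) by (auto simp: sgn_mult sgn_zero_iff)
  define c where "c = (\<lambda>s' t'. (if s' = (1::real) then 1 else (of_rat N1::real)) * (if t' = 1 then 1 else of_rat N2)
      * (if s'*t' = 1 then 1 else of_rat N3))"
  have key: "sgn (LHS s' t') = sgn \<eta> \<longleftrightarrow> c s' t' = 1" if st: "s' \<in> {-1,1}" "t' \<in> {-1,1}" for s' t'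
  proof -
    have "sgn (LHS s' t') = sgn \<eta> * c s' t'"
      unfolding cv[OF st] eta c_def sgn_mult sgnF[OF nz1 r1(2)] sgnF[OF nz2 r2(2)] sgnF[OF nz3 r3(2)]
      by (simp add: algebra_simps)
    thus ?thesis using sgn_eta by auto
  qed
  have eta_LHS: "\<eta> = LHS 1 1" using cv[of 1 1] eta unfolding F_def by simp
  have c_iff: "(c 1 1 = 1 \<and> c 1 (-1) = 1 \<and> c (-1) 1 = 1 \<and> c (-1) (-1) = 1) \<longleftrightarrow>
      (of_rat N1 = (of_rat N2::real) \<and> (of_rat N2::real) = of_rat N3)"
  proof -
    have cs: "c 1 1 = 1" "c 1 (-1) = of_rat N2 * of_rat N3" "c (-1) 1 = of_rat N1 * of_rat N3"
      "c (-1) (-1) = of_rat N1 * of_rat N2" unfolding c_def by simp_all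
    have "(c 1 1 = 1 \<and> c 1 (-1) = 1 \<and> c (-1) 1 = 1 \<and> c (-1) (-1) = 1) \<longleftrightarrow>
      (of_rat N2 * of_rat N3 = (1::real) \<and> of_rat N1 * of_rat N3 = (1::real) \<and> of_rat N1 * of_rat N2 = (1::real))"
      unfolding cs by simp
    also have "\<dots> \<longleftrightarrow> (of_rat N1 = (of_rat N2::real) \<and> (of_rat N2::real) = of_rat N3)"
      by (rule pm_eq[OF M[OF r1(2)] M[OF r2(2)] M[OF r3(2)]])
    finally show ?thesis .
  qed
  have ts_iff: "totally_signed d1 d2 \<eta> \<longleftrightarrow> (\<forall>s'\<in>{-1,1::real}. \<forall>t'\<in>{-1,1::real}. c s' t' = 1)"
  proof
    assume "totally_signed d1 d2 \<eta>"
    then obtain a b c' e where ab: "\<eta> = of_rat a + of_rat b * w1 + of_rat c' * w2 + of_rat e * (w1 * w2)"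
      and all: "\<forall>s' \<in> {-1, 1::real}. \<forall>t' \<in> {-1, 1::real}.
          sgn (of_rat a + s' * of_rat b * w1 + t' * of_rat c' * w2 + s' * t' * of_rat e * (w1 * w2)) = sgn \<eta>"
      unfolding totally_signed_def w1_def[symmetric] w2_def[symmetric] sqrt12 by blast
    have "of_rat (a - A) + of_rat (b - B) * w1 + of_rat (c' - C) * w2 + of_rat (e - E) * (w1 * w2) = 0"
      using ab eta_LHS unfolding LHS_def sqrt12 by (simp add: of_rat_diff algebra_simps)
    hence "a - A = 0 \<and> b - B = 0 \<and> c' - C = 0 \<and> e - E = 0" by (rule lin4[OF irr1 irr2 irr12 sq1 sq2])
    hence "a = A" "b = B" "c' = C" "e = E" by auto
    hence "\<forall>s' \<in> {-1, 1::real}. \<forall>t' \<in> {-1, 1::real}. sgn (LHS s' t') = sgn \<eta>"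
      using all unfolding LHS_def sqrt12 by simp
    thus "\<forall>s'\<in>{-1,1::real}. \<forall>t'\<in>{-1,1::real}. c s' t' = 1" using key by blast
  next
    assume "\<forall>s'\<in>{-1,1::real}. \<forall>t'\<in>{-1,1::real}. c s' t' = 1"
    hence "\<forall>s' \<in> {-1, 1::real}. \<forall>t' \<in> {-1, 1::real}. sgn (LHS s' t') = sgn \<eta>" using key by blast
    moreover have "\<eta> = of_rat A + of_rat B * w1 + of_rat C * w2 + of_rat E * sqrt (real_of_int (d1 * d2))"
      using eta_LHS unfolding LHS_def by simp
    ultimately show "totally_signed d1 d2 \<eta>"
      unfolding totally_signed_def LHS_def w1_def[symmetric] w2_def[symmetric] by blast
  qed
  have pu: "\<eta> \<in> prod_units d1 d2 d3"
  proof -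
    have Us: "Uq w1 (of_int d1) s 1" using assms(13) Uq_one by auto
    have "Uq w1 (of_int d1) (s * y1) (1 * N1)" by (rule Uq_mult[OF sq1 Us V1])
    hence "s * y1 \<in> quad_units d1" using Uq_units[of d1] assms(1) unfolding w1_def by auto
    moreover have "y2 \<in> quad_units d2" using Uq_units[of d2] assms(2) V2 unfolding w2_def by auto
    moreover have "y3 \<in> quad_units d3" using Uq_units[of d3] d3f(1) V3 unfolding w3_def by auto
    moreover have "\<eta> = (s * y1) * y2 * y3" using assms(14) unfolding y1_def y2_def y3_def by simp
    ultimately show ?thesis unfolding prod_units_def by blast
  qed
  have "\<eta> \<in> OK_star d1 d2 d3 \<longleftrightarrow> totally_signed d1 d2 \<eta>" using pu unfolding OK_star_def by blast
  also have "\<dots> \<longleftrightarrow> (of_rat N1 = (of_rat N2::real) \<and> (of_rat N2::real) = of_rat N3)"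
    unfolding ts_iff c_iff[symmetric] by auto
  finally show ?thesis unfolding lp1 lp2 lp3 .
qed

end
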